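(* For every integer $n$ with $1\le n\le 10$, \[ s(P_n)=\max_{0\le r\le n}|Q^{(r)}(P_n)|. \]
   Context: $Q(P_n)$ is the family of subsets of $[n]=\{1,\dots,n\}$ containing no two consecutive integers, and $Q^{(r)}(P_n)$ its members of size $r$. $s(P_n)$ is the maximum size of an antichain (a subfamily in which no member is a proper subset of another) in $Q(P_n)$. *)

theory Defs
  imports Main
begin

definition Q :: "nat \<Rightarrow> nat set set" where
  "Q n = {S. S \<subseteq> {1..n} \<and> (\<forall>i. i \<in> S \<longrightarrow> Suc i \<notin> S)}"

definition Qr :: "nat \<Rightarrow> nat \<Rightarrow> nat set set" where
  "Qr n r = {S \<in> Q n. card S = r}"

definition is_antichain :: "'a set set \<Rightarrow> bool" where
  "is_antichain F \<longleftrightarrow> (\<forall>A\<in>F. \<forall>B\<in>F. \<not> A \<subset> B)"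

definition s :: "nat \<Rightarrow> nat" where
  "s n = Max {card F | F. F \<subseteq> Q n \<and> is_antichain F}"

end

theory Submission
  imports Defs
begin

fun gen :: "nat \<Rightarrow> nat list list" where
  "gen 0 = [[]]"
| "gen (Suc 0) = [[], [1]]"
| "gen (Suc (Suc n)) = gen (Suc n) @ map (\<lambda>l. l @ [Suc (Suc n)]) (gen n)"

lemma Q0: "Q 0 = {{}}" unfolding Q_def by auto
lemma Q1: "Q (Suc 0) = {{}, {1}}" unfolding Q_def by (auto simp: subset_iff)

lemma Q_rec: "Q (Suc (Suc n)) = Q (Suc n) \<union> insert (Suc (Suc n)) ` Q n"
proof
  show "Q (Suc (Suc n)) \<subseteq> Q (Suc n) \<union> insert (Suc (Suc n)) ` Q n"
  proof
    fix S assume S: "S \<in> Q (Suc (Suc n))"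
    show "S \<in> Q (Suc n) \<union> insert (Suc (Suc n)) ` Q n"
    proof (cases "Suc (Suc n) \<in> S")
      case False
      then have "S \<in> Q (Suc n)" using S unfolding Q_def
        by (auto simp: subset_iff) (metis le_Suc_eq)
      then show ?thesis by simp
    next
      case True
      then have n1: "Suc n \<notin> S" using S unfolding Q_def by auto
      have "S - {Suc (Suc n)} \<in> Q n" using S n1 unfolding Q_def
        by (auto simp: subset_iff) (metis le_Suc_eq)
      moreover have "S = insert (Suc (Suc n)) (S - {Suc (Suc n)})" using True by auto
      ultimately show ?thesis by blast
    qed
  qed
next
  show "Q (Suc n) \<union> insert (Suc (Suc n)) ` Q n \<subseteq> Q (Suc (Suc n))"
    unfolding Q_def by (auto simp: subset_iff)
qed

lemma gen_Q: "set (map set (gen n)) = Q n"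
proof (induction n rule: gen.induct)
  case (3 n)
  have "set ` set (gen (Suc (Suc n))) = set ` set (gen (Suc n)) \<union> insert (Suc (Suc n)) ` (set ` set (gen n))"
    by (auto simp: image_Un image_image)
  then show ?case using 3 unfolding list.set_map Q_rec by simp
qed (auto simp: Q0 Q1)

lemma sorted_wrt_cmp:
  assumes "sorted_wrt R c" "a \<in> set c" "b \<in> set c"
  shows "R a b \<or> R b a \<or> a = b"
proof -
  obtain i j where i: "i < length c" "a = c ! i" and j: "j < length c" "b = c ! j"
    using assms by (metis in_set_conv_nth)
  show ?thesis
  proof (cases i j rule: linorder_cases)
    case less then show ?thesis using assms(1) i j by (simp add: sorted_wrt_nth_less)
  next
    case equal then show ?thesis using i j by simp
  next
    case greater then show ?thesis using assms(1) i j by (simp add: sorted_wrt_nth_less)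
  qed
qed

lemma chain_bound:
  assumes ch: "\<forall>c\<in>set cs. sorted_wrt (\<lambda>a b. set a \<subseteq> set b) c"
    and cov: "\<forall>l\<in>set (gen n). l \<in> set (concat cs)"
    and F: "F \<subseteq> Q n" "is_antichain F"
  shows "card F \<le> length cs"
proof -
  have "\<forall>A\<in>F. \<exists>i. i < length cs \<and> A \<in> set ` set (cs!i)"
  proof
    fix A assume "A \<in> F"
    then have "A \<in> set ` set (gen n)" using F(1) gen_Q[of n] by auto
    then obtain l where l: "l \<in> set (gen n)" "A = set l" by auto
    then have "l \<in> set (concat cs)" using cov by auto
    then obtain c where c: "c \<in> set cs" "l \<in> set c" by auto
    then obtain i where "i < length cs" "c = cs ! i" by (metis in_set_conv_nth)
    then show "\<exists>i. i < length cs \<and> A \<in> set ` set (cs!i)" using c l by auto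
  qed
  then obtain f where f: "\<forall>A\<in>F. f A < length cs \<and> A \<in> set ` set (cs ! f A)"
    by metis
  have "inj_on f F"
  proof
    fix A B assume AB: "A \<in> F" "B \<in> F" "f A = f B"
    have "A \<in> set ` set (cs ! f A)" "B \<in> set ` set (cs ! f A)" using f AB by auto
    then obtain a b where ab: "a \<in> set (cs ! f A)" "b \<in> set (cs ! f A)" "A = set a" "B = set b"
      by blast
    have "cs ! f A \<in> set cs" using f AB by auto
    then have "set a \<subseteq> set b \<or> set b \<subseteq> set a \<or> a = b"
      using ch ab sorted_wrt_cmp[of "\<lambda>a b. set a \<subseteq> set b" "cs ! f A" a b] by auto
    then show "A = B" using F(2) AB ab unfolding is_antichain_def by blast
  qed
  moreover have "f ` F \<subseteq> {..<length cs}" using f by auto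
  ultimately show ?thesis using card_inj_on_le[of f F "{..<length cs}"] by simp
qed

lemma finite_Q: "finite (Q n)"
proof -
  have "Q n \<subseteq> Pow {1..n}" unfolding Q_def by auto
  then show ?thesis by (rule finite_subset) simp
qed

lemma Qr_antichain: "is_antichain (Qr n r)"
  unfolding is_antichain_def Qr_def
proof (intro ballI notI)
  fix A B assume A: "A \<in> {S \<in> Q n. card S = r}" and B: "B \<in> {S \<in> Q n. card S = r}" and "A \<subset> B"
  have "finite B" using B unfolding Q_def by (auto intro: finite_subset)
  have "card A < card B" using \<open>finite B\<close> \<open>A \<subset> B\<close> by (rule psubset_card_mono)
  then show False using A B by simp
qed

lemma Qr_sub: "Qr n r \<subseteq> Q n" unfolding Qr_def by auto

lemma cert:
  assumes ch: "\<forall>c\<in>set cs. sorted_wrt (\<lambda>a b. set a \<subseteq> set b) c"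
    and cov: "\<forall>l\<in>set (gen n). l \<in> set (concat cs)"
    and dist: "distinct (gen n)"
    and srt: "\<forall>l\<in>set (gen n). sorted_wrt (<) l"
    and len: "length (filter (\<lambda>l. length l = rz) (gen n)) = length cs"
    and rz: "rz \<le> n"
  shows "s n = Max {card (Qr n r) | r. r \<le> n}"
proof -
  let ?M = "length cs"
  let ?L = "filter (\<lambda>l. length l = rz) (gen n)"
  have QrL: "Qr n rz = set ` set ?L"
  proof -
    have "Qr n rz = {S \<in> set ` set (gen n). card S = rz}" unfolding Qr_def gen_Q[symmetric] by simp
    also have "\<dots> = set ` set ?L"
    proof -
      have "\<And>l. l \<in> set (gen n) \<Longrightarrow> card (set l) = length l"
        using srt by (simp add: strict_sorted_iff distinct_card)
      then show ?thesis by force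
    qed
    finally show ?thesis .
  qed
  have "inj_on set (set ?L)"
  proof
    fix x y assume "x \<in> set ?L" "y \<in> set ?L" "set x = set y"
    then show "x = y" using srt by (metis filter_is_subset subsetD sorted_distinct_set_unique strict_sorted_iff)
  qed
  moreover have "card (set ?L) = length ?L" using dist by (intro distinct_card) simp
  ultimately have cardQr: "card (Qr n rz) = ?M"
    using QrL len by (simp only: card_image)
  have bound: "\<And>F. F \<subseteq> Q n \<Longrightarrow> is_antichain F \<Longrightarrow> card F \<le> ?M"
    using chain_bound[OF ch cov] by blast
  let ?S = "{card F | F. F \<subseteq> Q n \<and> is_antichain F}"
  have finS: "finite ?S" by (rule finite_subset[of _ "{..?M}"]) (auto dest: bound)
  have "?M \<in> ?S" using cardQr Qr_sub Qr_antichain by (metis (mono_tags, lifting) mem_Collect_eq)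
  then have s1: "s n = ?M" unfolding s_def using finS bound
    by (intro antisym Max_ge) (auto intro!: Max.boundedI)
  let ?T = "{card (Qr n r) | r. r \<le> n}"
  have finT: "finite ?T" by simp
  have "?M \<in> ?T" using cardQr rz by (metis (mono_tags, lifting) mem_Collect_eq)
  moreover have "\<And>x. x \<in> ?T \<Longrightarrow> x \<le> ?M" using bound Qr_sub Qr_antichain by auto
  ultimately have "Max ?T = ?M" using finT by (intro antisym Max_ge) (auto intro!: Max.boundedI)
  then show ?thesis using s1 by simp
qed

definition cs1 :: "nat list list list" where
  "cs1 = [[[],[1]]]"

lemma s1: "s 1 = Max {card (Qr 1 r) | r. r \<le> 1}"
  by (rule cert[where cs=cs1 and rz=0]) (code_simp; fail)+

definition cs2 :: "nat list list list" where
  "cs2 = [[[],[1]],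
  [[2]]]"

lemma s2: "s 2 = Max {card (Qr 2 r) | r. r \<le> 2}"
  by (rule cert[where cs=cs2 and rz=1]) (code_simp; fail)+

definition cs3 :: "nat list list list" where
  "cs3 = [[[],[1],[1,3]],
  [[2]],
  [[3]]]"

lemma s3: "s 3 = Max {card (Qr 3 r) | r. r \<le> 3}"
  by (rule cert[where cs=cs3 and rz=1]) (code_simp; fail)+

definition cs4 :: "nat list list list" where
  "cs4 = [[[],[1],[1,4]],
  [[2],[2,4]],
  [[3],[1,3]],
  [[4]]]"

lemma s4: "s 4 = Max {card (Qr 4 r) | r. r \<le> 4}"
  by (rule cert[where cs=cs4 and rz=1]) (code_simp; fail)+

definition cs5 :: "nat list list list" where
  "cs5 = [[[],[1],[1,3],[1,3,5]],
  [[2],[2,4]],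
  [[3],[3,5]],
  [[4],[1,4]],
  [[5],[1,5]],
  [[2,5]]]"

lemma s5: "s 5 = Max {card (Qr 5 r) | r. r \<le> 5}"
  by (rule cert[where cs=cs5 and rz=2]) (code_simp; fail)+

definition cs6 :: "nat list list list" where
  "cs6 = [[[],[1],[1,3],[1,3,6]],
  [[2],[2,4],[2,4,6]],
  [[3],[3,5]],
  [[4],[1,4],[1,4,6]],
  [[5],[1,5],[1,3,5]],
  [[2,5]],
  [[6],[1,6]],
  [[2,6]],
  [[3,6]],
  [[4,6]]]"

lemma s6: "s 6 = Max {card (Qr 6 r) | r. r \<le> 6}"
  by (rule cert[where cs=cs6 and rz=2]) (code_simp; fail)+

definition cs7 :: "nat list list list" where
  "cs7 = [[[],[1],[1,3],[1,3,5],[1,3,5,7]],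
  [[2],[2,4],[2,4,7]],
  [[3],[3,5],[3,5,7]],
  [[4],[1,4],[1,4,7]],
  [[5],[1,5],[1,5,7]],
  [[2,5],[2,5,7]],
  [[6],[1,6],[1,4,6]],
  [[2,6],[2,4,6]],
  [[3,6],[1,3,6]],
  [[4,6]],
  [[7],[1,7],[1,3,7]],
  [[2,7]],
  [[3,7]],
  [[4,7]],
  [[5,7]]]"

lemma s7: "s 7 = Max {card (Qr 7 r) | r. r \<le> 7}"
  by (rule cert[where cs=cs7 and rz=2]) (code_simp; fail)+

definition cs8 :: "nat list list list" where
  "cs8 = [[[],[1],[1,3],[1,3,6],[1,3,6,8]],
  [[2],[2,4],[2,4,6],[2,4,6,8]],
  [[3],[3,5],[1,3,5],[1,3,5,8]],
  [[4],[1,4],[1,4,6],[1,4,6,8]],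
  [[5],[1,5],[1,5,7]],
  [[2,5],[2,5,8]],
  [[6],[1,6],[1,6,8]],
  [[2,6],[2,6,8]],
  [[3,6],[3,6,8]],
  [[4,6],[4,6,8]],
  [[7],[1,7],[1,3,7],[1,3,5,7]],
  [[2,7],[2,4,7]],
  [[3,7],[3,5,7]],
  [[4,7],[1,4,7]],
  [[5,7],[2,5,7]],
  [[8],[1,8],[1,3,8]],
  [[2,8],[2,4,8]],
  [[3,8],[3,5,8]],
  [[4,8],[1,4,8]],
  [[5,8],[1,5,8]],
  [[6,8]]]"

lemma s8: "s 8 = Max {card (Qr 8 r) | r. r \<le> 8}"
  by (rule cert[where cs=cs8 and rz=2]) (code_simp; fail)+

definition cs9 :: "nat list list list" where
  "cs9 = [[[],[1],[1,3],[1,3,6],[1,3,6,9]],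
  [[2],[2,4],[2,4,6],[2,4,6,9]],
  [[3],[3,5],[3,5,8]],
  [[4],[1,4],[1,4,7],[1,4,7,9]],
  [[5],[1,5],[1,3,5],[1,3,5,7],[1,3,5,7,9]],
  [[2,5],[2,5,7],[2,5,7,9]],
  [[6],[1,6],[1,4,6],[1,4,6,9]],
  [[2,6],[2,6,8]],
  [[3,6],[3,6,8]],
  [[4,6],[4,6,8]],
  [[7],[1,7],[1,3,7],[1,3,7,9]],
  [[2,7],[2,4,7],[2,4,7,9]],
  [[3,7],[3,5,7],[3,5,7,9]],
  [[4,7],[4,7,9]],
  [[5,7],[1,5,7],[1,5,7,9]],
  [[8],[1,8],[1,4,8],[1,4,6,8]],
  [[2,8],[2,5,8]],
  [[3,8],[1,3,8],[1,3,6,8]],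
  [[4,8],[2,4,8],[2,4,6,8]],
  [[5,8],[1,5,8],[1,3,5,8]],
  [[6,8],[1,6,8]],
  [[9],[1,9],[1,3,9],[1,3,5,9]],
  [[2,9],[2,4,9]],
  [[3,9],[3,5,9]],
  [[4,9],[1,4,9]],
  [[5,9],[1,5,9]],
  [[2,5,9]],
  [[6,9],[1,6,9]],
  [[2,6,9]],
  [[3,6,9]],
  [[4,6,9]],
  [[7,9],[1,7,9]],
  [[2,7,9]],
  [[3,7,9]],
  [[5,7,9]]]"

lemma s9: "s 9 = Max {card (Qr 9 r) | r. r \<le> 9}"
  by (rule cert[where cs=cs9 and rz=3]) (code_simp; fail)+

definition cs10 :: "nat list list list" where
  "cs10 = [[[],[1],[1,3],[1,3,6],[1,3,6,10]],
  [[2],[2,4],[2,4,6],[2,4,6,8],[2,4,6,8,10]],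
  [[3],[3,5],[3,5,8],[3,5,8,10]],
  [[4],[1,4],[1,4,7],[1,4,7,10]],
  [[5],[1,5],[1,3,5],[1,3,5,8],[1,3,5,8,10]],
  [[2,5],[2,5,7],[2,5,7,10]],
  [[6],[1,6],[1,4,6],[1,4,6,8],[1,4,6,8,10]],
  [[2,6],[2,6,8],[2,6,8,10]],
  [[3,6],[3,6,8],[3,6,8,10]],
  [[4,6],[4,6,8],[4,6,8,10]],
  [[7],[1,7],[1,3,7],[1,3,7,10]],
  [[2,7],[2,4,7],[2,4,7,10]],
  [[3,7],[3,5,7],[3,5,7,10]],
  [[4,7],[4,7,9]],
  [[5,7],[1,5,7],[1,3,5,7],[1,3,5,7,10]],
  [[8],[1,8],[1,4,8],[1,4,8,10]],
  [[2,8],[2,5,8],[2,5,8,10]],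
  [[3,8],[1,3,8],[1,3,6,8],[1,3,6,8,10]],
  [[4,8],[2,4,8],[2,4,8,10]],
  [[5,8],[1,5,8],[1,5,8,10]],
  [[6,8],[1,6,8],[1,6,8,10]],
  [[9],[1,9],[1,3,9],[1,3,5,9],[1,3,5,7,9]],
  [[2,9],[2,4,9],[2,4,7,9]],
  [[3,9],[3,5,9],[3,5,7,9]],
  [[4,9],[1,4,9],[1,4,7,9]],
  [[5,9],[1,5,9],[1,5,7,9]],
  [[2,5,9],[2,5,7,9]],
  [[6,9],[1,6,9],[1,4,6,9]],
  [[2,6,9],[2,4,6,9]],
  [[3,6,9],[1,3,6,9]],
  [[4,6,9]],
  [[7,9],[1,7,9],[1,3,7,9]],
  [[2,7,9]],
  [[3,7,9]],
  [[5,7,9]],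
  [[10],[1,10],[1,3,10],[1,3,8,10]],
  [[2,10],[2,4,10],[2,4,6,10]],
  [[3,10],[3,5,10],[1,3,5,10]],
  [[4,10],[1,4,10],[1,4,6,10]],
  [[5,10],[1,5,10],[1,5,7,10]],
  [[2,5,10]],
  [[6,10],[1,6,10]],
  [[2,6,10]],
  [[3,6,10]],
  [[4,6,10]],
  [[7,10],[1,7,10]],
  [[2,7,10]],
  [[3,7,10]],
  [[4,7,10]],
  [[5,7,10]],
  [[8,10],[1,8,10]],
  [[2,8,10]],
  [[3,8,10]],
  [[4,8,10]],
  [[5,8,10]],
  [[6,8,10]]]"

lemma s10: "s 10 = Max {card (Qr 10 r) | r. r \<le> 10}"
  by (rule cert[where cs=cs10 and rz=3]) (code_simp; fail)+

theorem mainTheorem12: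
  fixes n :: nat
  assumes "1 \<le> n" and "n \<le> 10"
  shows "s n = Max {card (Qr n r) | r. r \<le> n}"
proof -
  have "n = 1 \<or> n = 2 \<or> n = 3 \<or> n = 4 \<or> n = 5 \<or> n = 6 \<or> n = 7 \<or> n = 8 \<or> n = 9 \<or> n = 10"
    using assms by arith
  then show ?thesis using s1 s2 s3 s4 s5 s6 s7 s8 s9 s10 by (elim disjE) simp_all
qed

end
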